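(* Let $\mathcal{G}=(V,\mathcal{W},\{P_S\})$ be a Max $k$-CSP instance and let $\mu=\{\mathcal{X}_S\}$ be a $k$-level $\kappa$-independent Sherali-Adams solution of value $1-\delta$. Then the random assignment $\phi:V\to\Sigma$ obtained by choosing each $\phi(x)$ independently according to the marginal $\mathcal{X}_{\{x\}}$ (independent rounding) has expected value at least $(\delta^\delta e^{-\kappa})^{\frac{1}{1-\delta}}(1-\delta)$.
   Context: A Max $k$-CSP instance has finite variable set $V$, alphabet $\Sigma$, a distribution $\mathcal{W}$ on $V^k$ and predicates $P_S:\Sigma^k\to[0,1]$; the value of $\phi:V\to\Sigma$ is $\mathbb{E}_{S\sim\mathcal{W}}[P_S(\phi|_S)]$. Convention: if a tuple $S$ contains a repeated variable, $P_S$ is $0$ on any assignment giving different values to the same variable. An $r$-level Sherali-Adams (SA) solution is a collection $\mu=\{\mathcal{X}_S\}$ of distributions $\mathcal{X}_S$ on $\Sigma^S$, one for each $S\subseteq V$ with $|S|\le r$, such that for all such $S,T$ the marginals of $\mathcal{X}_S$ and $\mathcal{X}_T$ on $\Sigma^{S\cap T}$ agree. For $r\ge k$ its value is $\mathbb{E}_{S\sim\mathcal{W}}[\mathbb{E}_{\phi_S\sim\mathcal{X}_{\{x_{i_1},\dots,x_{i_k}\}}}[P_S(\phi_S)]]$ where $S=(x_{i_1},\dots,x_{i_k})$. For a tuple $S=(x_{i_1},\dots,x_{i_j})$, $C_\mu(x_S)$ is the total correlation $C(\sigma_{i_1};\dots;\sigma_{i_j})=D_{KL}(\text{joint}\,\|\,\text{product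 of marginals})$ where $(\sigma_{i_1},\dots,\sigma_{i_j})$ is jointly sampled from $\mathcal{X}_{\{x_{i_1},\dots,x_{i_j}\}}$. $C(\mu)=\mathbb{E}_{S\sim\mathcal{W}}[C_\mu(x_S)]$, and $\mu$ is $\kappa$-independent if $C(\mu)\le\kappa$. Natural logarithms throughout; $0^0=1$, and the bound is defined to be $0$ when $\delta=1$. *)

theory Defs
  imports "HOL-Probability.Probability"
begin

text \<open>A k-tuple of variables is a list of length k; W is a pmf on such lists;
  P S is the predicate of tuple S, evaluated on the list of values.
  A local distribution on Sigma^S is a pmf on functions in PiE S UNIV
  (functions that are undefined outside S).\<close>

definition csp_instance ::
  "nat \<Rightarrow> 'v::finite list pmf \<Rightarrow> ('v list \<Rightarrow> 's::finite list \<Rightarrow> real) \<Rightarrow> bool" where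
  "csp_instance k W P \<longleftrightarrow>
     (\<forall>S \<in> set_pmf W. length S = k) \<and>
     (\<forall>S \<sigma>. 0 \<le> P S \<sigma> \<and> P S \<sigma> \<le> 1) \<and>
     (\<forall>S \<in> set_pmf W. \<forall>\<sigma>. length \<sigma> = k \<longrightarrow>
        (\<exists>i<k. \<exists>j<k. S ! i = S ! j \<and> \<sigma> ! i \<noteq> \<sigma> ! j) \<longrightarrow> P S \<sigma> = 0)"

definition SA_solution :: "nat \<Rightarrow> ('v::finite set \<Rightarrow> ('v \<Rightarrow> 's::finite) pmf) \<Rightarrow> bool" where
  "SA_solution r X \<longleftrightarrow>
     (\<forall>S. card S \<le> r \<longrightarrow> set_pmf (X S) \<subseteq> PiE S (\<lambda>_. UNIV)) \<and>
     (\<forall>S T. card S \<le> r \<longrightarrow> card T \<le> r \<longrightarrow>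
        map_pmf (\<lambda>f. restrict f (S \<inter> T)) (X S) = map_pmf (\<lambda>f. restrict f (S \<inter> T)) (X T))"

definition SA_value ::
  "'v::finite list pmf \<Rightarrow> ('v list \<Rightarrow> 's::finite list \<Rightarrow> real) \<Rightarrow> ('v set \<Rightarrow> ('v \<Rightarrow> 's) pmf) \<Rightarrow> real" where
  "SA_value W P X =
     measure_pmf.expectation W (\<lambda>S. measure_pmf.expectation (X (set S)) (\<lambda>\<phi>. P S (map \<phi> S)))"

definition KL_div :: "'a pmf \<Rightarrow> ('a \<Rightarrow> real) \<Rightarrow> real" where
  "KL_div p q = (\<Sum>y\<in>set_pmf p. pmf p y * ln (pmf p y / q y))"

definition total_corr :: "('v set \<Rightarrow> ('v \<Rightarrow> 's) pmf) \<Rightarrow> 'v list \<Rightarrow> real" where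
  "total_corr X S =
     (let J = map_pmf (\<lambda>\<phi>. map \<phi> S) (X (set S)) in
      KL_div J (\<lambda>ys. \<Prod>i<length S. pmf (map_pmf (\<lambda>\<phi>. \<phi> (S ! i)) (X (set S))) (ys ! i)))"

definition corr :: "'v list pmf \<Rightarrow> ('v set \<Rightarrow> ('v \<Rightarrow> 's) pmf) \<Rightarrow> real" where
  "corr W X = measure_pmf.expectation W (\<lambda>S. total_corr X S)"

definition indep_rounding :: "('v::finite set \<Rightarrow> ('v \<Rightarrow> 's) pmf) \<Rightarrow> ('v \<Rightarrow> 's) pmf" where
  "indep_rounding X = Pi_pmf UNIV undefined (\<lambda>x. map_pmf (\<lambda>\<phi>. \<phi> x) (X {x}))"

definition assignment_value ::
  "'v list pmf \<Rightarrow> ('v list \<Rightarrow> 's list \<Rightarrow> real) \<Rightarrow> ('v \<Rightarrow> 's) \<Rightarrow> real" where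
  "assignment_value W P \<phi> = measure_pmf.expectation W (\<lambda>S. P S (map \<phi> S))"

definition rounding_bound :: "real \<Rightarrow> real \<Rightarrow> real" where
  "rounding_bound \<delta> \<kappa> =
     (if \<delta> = 1 then 0
      else ((if \<delta> = 0 then 1 else \<delta> powr \<delta>) * exp (- \<kappa>)) powr (1 / (1 - \<delta>)) * (1 - \<delta>))"

end

theory Submission imports Defs begin

lemma prod_nth_le:
  fixes g :: "'a \<Rightarrow> real"
  assumes "\<forall>x\<in>set S. 0 \<le> g x \<and> g x \<le> 1"
  shows "(\<Prod>i<length S. g (S!i)) \<le> prod g (set S)"
  using assms
proof (induction S)
  case Nil
  then show ?case by simp
next
  case (Cons x S)
  have IH: "(\<Prod>i<length S. g (S!i)) \<le> prod g (set S)" using Cons by simp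
  have g: "0 \<le> g x" "g x \<le> 1" using Cons.prems by auto
  have nn: "0 \<le> (\<Prod>i<length S. g (S!i))" using Cons.prems
    by (intro prod_nonneg) auto
  have pn: "0 \<le> prod g (set S)" using Cons.prems by (intro prod_nonneg) auto
  have "(\<Prod>i<length (x#S). g ((x#S)!i)) = g x * (\<Prod>i<length S. g (S!i))"
    unfolding length_Cons prod.lessThan_Suc_shift by simp
  also have "\<dots> \<le> g x * prod g (set S)" using IH g by (simp add: mult_left_mono)
  also have "\<dots> \<le> prod g (set (x#S))"
  proof (cases "x \<in> set S")
    case True
    then have "set (x#S) = set S" by auto
    then show ?thesis using g pn by (simp add: mult_left_le_one_le)
  next
    case False
    then show ?thesis by simp
  qed
  finally show ?case .
qed

lemma core_ineq:
  fixes p q f t1 t2 :: real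
  assumes "p > 0" "q > 0" "0 \<le> f" "f \<le> 1" "t1 > 0" "t2 > 0"
  shows "ln t1 * (f*p) + ln t2 * (p - f*p) + p - t1*(f*q) - t2*((1-f)*q) \<le> p * ln (p/q)"
proof -
  have h: "p * ln t + p - t*q \<le> p * ln (p/q)" if t: "t > 0" for t
  proof -
    have "ln (t*q/p) \<le> t*q/p - 1" using assms t by (intro ln_le_minus_one) auto
    moreover have "ln (t*q/p) = ln t + ln q - ln p" using assms t by (simp add: ln_div ln_mult)
    moreover have "ln (p/q) = ln p - ln q" using assms by (simp add: ln_div)
    ultimately have "ln t + 1 - t*q/p \<le> ln (p/q)" by linarith
    then have "p * (ln t + 1 - t*q/p) \<le> p * ln (p/q)" using assms by (simp add: mult_left_mono)
    moreover have "p * (ln t + 1 - t*q/p) = p * ln t + p - t*q" using assms by (simp add: field_simps)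
    ultimately show ?thesis by simp
  qed
  have "f * (p * ln t1 + p - t1*q) \<le> f * (p * ln (p/q))" using h[OF assms(5)] assms by (simp add: mult_left_mono)
  moreover have "(1-f) * (p * ln t2 + p - t2*q) \<le> (1-f) * (p * ln (p/q))" using h[OF assms(6)] assms by (simp add: mult_left_mono)
  ultimately have "f * (p * ln t1 + p - t1*q) + (1-f) * (p * ln t2 + p - t2*q) \<le> p * ln (p/q)"
    by (simp add: algebra_simps)
  then show ?thesis by (simp add: algebra_simps)
qed

theorem lemma5p3:
  fixes k :: nat
    and W :: "'v::finite list pmf"
    and P :: "'v list \<Rightarrow> 's::finite list \<Rightarrow> real"
    and X :: "'v set \<Rightarrow> ('v \<Rightarrow> 's) pmf"
    and \<kappa> \<delta> :: real
  assumes "csp_instance k W P"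
    and "SA_solution k X"
    and "corr W X \<le> \<kappa>"
    and "SA_value W P X = 1 - \<delta>"
  shows "measure_pmf.expectation (indep_rounding X) (\<lambda>\<phi>. assignment_value W P \<phi>)
           \<ge> rounding_bound \<delta> \<kappa>"
proof -
  note csp = assms(1)[unfolded csp_instance_def]
  note sa = assms(2)[unfolded SA_solution_def]
  define M where "M x = map_pmf (\<lambda>\<phi>. \<phi> x) (X {x})" for x
  define J where "J S = map_pmf (\<lambda>\<phi>. map \<phi> S) (X (set S))" for S
  define Q where "Q S ys = (\<Prod>i<length S. pmf (map_pmf (\<lambda>\<phi>. \<phi> (S!i)) (X (set S))) (ys!i))" for S ys
  define R where "R = indep_rounding X"
  define D where "D S = map_pmf (\<lambda>\<phi>. map \<phi> S) R" for S
  define A where "A = set_pmf W"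
  define Y where "Y S = set_pmf (J S)" for S
  define w where "w S = pmf W S" for S
  define j where "j S y = pmf (J S) y" for S y
  define aS where "aS S = (\<Sum>y\<in>Y S. P S y * j S y)" for S
  define b1S where "b1S S = (\<Sum>y\<in>Y S. P S y * Q S y)" for S
  define b2S where "b2S S = (\<Sum>y\<in>Y S. (1 - P S y) * Q S y)" for S
  define cS where "cS S = (\<Sum>y\<in>Y S. j S y * ln (j S y / Q S y))" for S
  define a where "a = 1 - \<delta>"
  define B1 where "B1 = (\<Sum>S\<in>A. w S * b1S S)"
  define B2 where "B2 = (\<Sum>S\<in>A. w S * b2S S)"
  have wnn: "0 \<le> w S" for S by (simp add: w_def)
  have jnn: "0 \<le> j S y" for S y by (simp add: j_def)
  have Pb: "0 \<le> P S y" "P S y \<le> 1" for S y using csp by auto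
  have finA: "finite A"
  proof -
    have "A \<subseteq> {xs. set xs \<subseteq> UNIV \<and> length xs = k}" using csp by (auto simp: A_def)
    then show ?thesis by (rule finite_subset) (rule finite_lists_length_eq, simp)
  qed
  have finpmf: "finite (set_pmf (p :: ('v \<Rightarrow> 's) pmf))" for p
    by (rule finite_subset[OF subset_UNIV]) simp
  have finY: "finite (Y S)" for S unfolding Y_def J_def using finpmf by simp
  have finD: "finite (set_pmf (D S))" for S unfolding D_def using finpmf by simp
  have jpos: "j S y > 0" if "y \<in> Y S" for S y using that unfolding j_def Y_def by (simp add: pmf_positive)
  have wpos: "w S > 0" if "S \<in> A" for S using that unfolding w_def A_def by (simp add: pmf_positive)
  have sumw: "(\<Sum>S\<in>A. w S) = 1" unfolding w_def A_def using finA[unfolded A_def] by (rule sum_pmf_eq_1) simp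
  have sumj: "(\<Sum>y\<in>Y S. j S y) = 1" for S unfolding j_def Y_def using finY[of S, unfolded Y_def] by (rule sum_pmf_eq_1) simp
  have cons: "map_pmf (\<lambda>\<psi>. \<psi> x) (X (set S)) = M x" if "S \<in> A" "x \<in> set S" for S x
  proof -
    have len: "length S = k" using csp that by (auto simp: A_def)
    have c1: "card (set S) \<le> k" using card_length len by metis
    have c2: "card {x} \<le> k" using that len by (cases S) auto
    have "map_pmf (\<lambda>f. restrict f (set S \<inter> {x})) (X (set S)) = map_pmf (\<lambda>f. restrict f (set S \<inter> {x})) (X {x})"
      using sa c1 c2 by blast
    then have "map_pmf (\<lambda>g. g x) (map_pmf (\<lambda>f. restrict f (set S \<inter> {x})) (X (set S))) = map_pmf (\<lambda>g. g x) (map_pmf (\<lambda>f. restrict f (set S \<inter> {x})) (X {x}))" by simp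
    then show ?thesis using that(2) by (simp add: map_pmf_comp M_def)
  qed
  have K: "0 < Q S y \<and> Q S y \<le> pmf (D S) y" if hSA: "S \<in> A" and hY: "y \<in> Y S" for S y
  proof -
    obtain \<phi> where phi: "\<phi> \<in> set_pmf (X (set S))" "y = map \<phi> S" using hY unfolding Y_def J_def by auto
    have Qphi: "Q S y = (\<Prod>i<length S. pmf (map_pmf (\<lambda>\<psi>. \<psi> (S!i)) (X (set S))) (\<phi> (S!i)))"
      unfolding Q_def phi(2) by (intro prod.cong) auto
    have pos: "0 < Q S y" unfolding Qphi using phi(1)
      by (intro prod_pos) (auto intro!: pmf_positive)
    have Qeq: "Q S y = (\<Prod>i<length S. pmf (M (S!i)) (\<phi> (S!i)))"
      unfolding Qphi using cons[OF hSA] by (intro prod.cong) auto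
    have "Q S y \<le> (\<Prod>x\<in>set S. pmf (M x) (\<phi> x))"
      unfolding Qeq by (rule prod_nth_le) (auto simp: pmf_le_1)
    also have "\<dots> = pmf (D S) y"
    proof -
      have vim: "(\<lambda>\<psi>. map \<psi> S) -` {y} = Pi UNIV (\<lambda>x. if x \<in> set S then {\<phi> x} else UNIV)"
        unfolding phi(2) by (auto simp: map_eq_conv Pi_def split: if_splits)
      have Req: "R = Pi_pmf UNIV undefined M" unfolding R_def indep_rounding_def M_def by simp
      have "pmf (D S) y = measure_pmf.prob R (Pi UNIV (\<lambda>x. if x \<in> set S then {\<phi> x} else UNIV))"
        unfolding D_def pmf_map vim ..
      also have "\<dots> = (\<Prod>x\<in>UNIV. measure_pmf.prob (M x) (if x \<in> set S then {\<phi> x} else UNIV))"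
        unfolding Req by (rule measure_Pi_pmf_Pi) simp
      also have "\<dots> = (\<Prod>x\<in>UNIV. if x \<in> set S then pmf (M x) (\<phi> x) else 1)"
        by (intro prod.cong) (auto simp: measure_pmf_single)
      also have "\<dots> = (\<Prod>x\<in>set S. pmf (M x) (\<phi> x))"
        by (simp add: prod.If_cases Int_def)
      finally show ?thesis by simp
    qed
    finally show ?thesis using pos by simp
  qed
  have Qnn: "0 \<le> Q S y" if "S \<in> A" "y \<in> Y S" for S y using K[OF that] by simp
  have b1nn: "0 \<le> b1S S" if "S \<in> A" for S unfolding b1S_def using Qnn[OF that] Pb by (intro sum_nonneg mult_nonneg_nonneg) auto
  have b2nn: "0 \<le> b2S S" if "S \<in> A" for S unfolding b2S_def using Qnn[OF that] Pb by (intro sum_nonneg mult_nonneg_nonneg) auto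
  have b12: "b1S S + b2S S \<le> 1" if "S \<in> A" for S
  proof -
    have "b1S S + b2S S = (\<Sum>y\<in>Y S. Q S y)" unfolding b1S_def b2S_def
      by (simp add: sum.distrib[symmetric] algebra_simps)
    also have "\<dots> \<le> (\<Sum>y\<in>Y S. pmf (D S) y)" using K[OF that] by (intro sum_mono) auto
    also have "\<dots> = measure_pmf.prob (D S) (Y S)" by (simp add: measure_measure_pmf_finite finY)
    also have "\<dots> \<le> 1" by simp
    finally show ?thesis .
  qed
  have B1nn: "0 \<le> B1" unfolding B1_def using b1nn wnn by (intro sum_nonneg mult_nonneg_nonneg) auto
  have B2nn: "0 \<le> B2" unfolding B2_def using b2nn wnn by (intro sum_nonneg mult_nonneg_nonneg) auto
  have B12: "B1 + B2 \<le> 1"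
  proof -
    have "B1 + B2 = (\<Sum>S\<in>A. w S * (b1S S + b2S S))" unfolding B1_def B2_def
      by (simp add: sum.distrib[symmetric] algebra_simps)
    also have "\<dots> \<le> (\<Sum>S\<in>A. w S * 1)" using b12 wnn by (intro sum_mono mult_left_mono) auto
    finally show ?thesis using sumw by simp
  qed
  have corr_eq: "corr W X = (\<Sum>S\<in>A. w S * cS S)"
  proof -
    have "corr W X = (\<Sum>S\<in>A. total_corr X S * pmf W S)"
      unfolding corr_def by (rule integral_measure_pmf_real) (use finA in \<open>auto simp: A_def\<close>)
    also have "\<dots> = (\<Sum>S\<in>A. w S * cS S)"
      by (intro sum.cong) (auto simp: Let_def total_corr_def KL_div_def cS_def Y_def j_def J_def Q_def w_def)
    finally show ?thesis .
  qed
  have a_eq: "a = (\<Sum>S\<in>A. w S * aS S)"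
  proof -
    have inner: "measure_pmf.expectation (X (set S)) (\<lambda>\<phi>. P S (map \<phi> S)) = aS S" for S
    proof -
      have "measure_pmf.expectation (X (set S)) (\<lambda>\<phi>. P S (map \<phi> S)) = measure_pmf.expectation (J S) (P S)"
        by (simp add: J_def)
      also have "\<dots> = aS S" unfolding aS_def j_def Y_def
        by (rule integral_measure_pmf_real) (auto simp: finY[unfolded Y_def])
      finally show ?thesis .
    qed
    have "a = SA_value W P X" using assms(4) a_def by simp
    also have "\<dots> = (\<Sum>S\<in>A. measure_pmf.expectation (X (set S)) (\<lambda>\<phi>. P S (map \<phi> S)) * pmf W S)"
      unfolding SA_value_def by (rule integral_measure_pmf_real) (use finA in \<open>auto simp: A_def\<close>)
    also have "\<dots> = (\<Sum>S\<in>A. w S * aS S)" by (simp add: inner w_def mult.commute)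
    finally show ?thesis .
  qed
  have indep: "B1 \<le> measure_pmf.expectation (indep_rounding X) (\<lambda>\<phi>. assignment_value W P \<phi>)"
  proof -
    have intR: "integrable (measure_pmf R) g" for g :: "('v \<Rightarrow> 's) \<Rightarrow> real"
      by (rule integrable_measure_pmf_finite) (rule finpmf)
    have av: "assignment_value W P \<phi> = (\<Sum>S\<in>A. P S (map \<phi> S) * w S)" for \<phi>
      unfolding assignment_value_def w_def by (rule integral_measure_pmf_real) (use finA in \<open>auto simp: A_def\<close>)
    have inner: "b1S S \<le> measure_pmf.expectation R (\<lambda>\<phi>. P S (map \<phi> S))" if "S \<in> A" for S
    proof -
      have "b1S S \<le> (\<Sum>y\<in>Y S. P S y * pmf (D S) y)" unfolding b1S_def
        using K[OF that] Pb by (intro sum_mono mult_left_mono) auto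
      also have "\<dots> \<le> (\<Sum>y\<in>set_pmf (D S) \<union> Y S. P S y * pmf (D S) y)"
        using Pb by (intro sum_mono2) (auto simp: finY finD)
      also have "\<dots> = measure_pmf.expectation (D S) (P S)"
        by (rule integral_measure_pmf_real[symmetric]) (auto simp: finY finD)
      also have "\<dots> = measure_pmf.expectation R (\<lambda>\<phi>. P S (map \<phi> S))" by (simp add: D_def)
      finally show ?thesis .
    qed
    have "measure_pmf.expectation (indep_rounding X) (\<lambda>\<phi>. assignment_value W P \<phi>)
        = measure_pmf.expectation R (\<lambda>\<phi>. \<Sum>S\<in>A. P S (map \<phi> S) * w S)" by (simp add: av R_def)
    also have "\<dots> = (\<Sum>S\<in>A. measure_pmf.expectation R (\<lambda>\<phi>. P S (map \<phi> S) * w S))"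
      by (rule Bochner_Integration.integral_sum) (rule intR)
    also have "\<dots> = (\<Sum>S\<in>A. w S * measure_pmf.expectation R (\<lambda>\<phi>. P S (map \<phi> S)))"
      by (simp add: mult.commute)
    finally have eq: "measure_pmf.expectation (indep_rounding X) (\<lambda>\<phi>. assignment_value W P \<phi>)
        = (\<Sum>S\<in>A. w S * measure_pmf.expectation R (\<lambda>\<phi>. P S (map \<phi> S)))" .
    show ?thesis unfolding eq B1_def using inner wnn
      by (intro sum_mono mult_left_mono) auto
  qed
  have main: "ln t1 * a + ln t2 * (1 - a) + 1 - t1 * B1 - t2 * B2 \<le> \<kappa>" if t: "t1 > 0" "t2 > 0" for t1 t2
  proof -
    have perS: "ln t1 * aS S + ln t2 * (1 - aS S) + 1 - t1 * b1S S - t2 * b2S S \<le> cS S" if "S \<in> A" for S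
    proof -
      have "ln t1 * aS S + ln t2 * (1 - aS S) + 1 - t1 * b1S S - t2 * b2S S
          = (\<Sum>y\<in>Y S. ln t1 * (P S y * j S y) + ln t2 * (j S y - P S y * j S y) + j S y
               - t1 * (P S y * Q S y) - t2 * ((1 - P S y) * Q S y))"
        unfolding aS_def b1S_def b2S_def sumj[of S, symmetric]
        by (simp add: sum.distrib sum_subtractf sum_distrib_left right_diff_distrib)
      also have "\<dots> \<le> cS S" unfolding cS_def
        using K[OF that] jpos Pb t by (intro sum_mono core_ineq) auto
      finally show ?thesis .
    qed
    have "ln t1 * a + ln t2 * (1 - a) + 1 - t1 * B1 - t2 * B2
        = (\<Sum>S\<in>A. w S * (ln t1 * aS S + ln t2 * (1 - aS S) + 1 - t1 * b1S S - t2 * b2S S))"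
    proof -
      have "(\<Sum>S\<in>A. w S * (ln t1 * aS S + ln t2 * (1 - aS S) + 1 - t1 * b1S S - t2 * b2S S))
        = (\<Sum>S\<in>A. ln t1 * (w S * aS S) + ln t2 * (w S - w S * aS S) + w S - t1 * (w S * b1S S) - t2 * (w S * b2S S))"
        by (intro sum.cong) (auto simp: algebra_simps)
      also have "\<dots> = ln t1 * (\<Sum>S\<in>A. w S * aS S) + ln t2 * ((\<Sum>S\<in>A. w S) - (\<Sum>S\<in>A. w S * aS S))
          + (\<Sum>S\<in>A. w S) - t1 * (\<Sum>S\<in>A. w S * b1S S) - t2 * (\<Sum>S\<in>A. w S * b2S S)"
        by (simp add: sum.distrib sum_subtractf sum_distrib_left right_diff_distrib)
      finally show ?thesis unfolding a_eq B1_def B2_def sumw by simp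
    qed
    also have "\<dots> \<le> (\<Sum>S\<in>A. w S * cS S)" using perS wnn
      by (intro sum_mono mult_left_mono) auto
    also have "\<dots> \<le> \<kappa>" using assms(3) corr_eq by simp
    finally show ?thesis .
  qed
  have ann: "0 \<le> a" unfolding a_eq aS_def using wnn Pb jnn
    by (intro sum_nonneg mult_nonneg_nonneg) auto
  have ale: "a \<le> 1"
  proof -
    have "aS S \<le> 1" for S unfolding aS_def sumj[of S, symmetric] using Pb jnn
      by (intro sum_mono mult_left_le_one_le) auto
    then have "a \<le> (\<Sum>S\<in>A. w S * 1)" unfolding a_eq using wnn
      by (intro sum_mono mult_left_mono) auto
    then show ?thesis using sumw by simp
  qed
  have B1pos: "B1 > 0" if "a > 0"
  proof (rule ccontr)
    assume "\<not> B1 > 0"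
    then have "B1 = 0" using B1nn by simp
    then have z1: "\<forall>S\<in>A. w S * b1S S = 0" unfolding B1_def using finA b1nn wnn
      by (subst (asm) sum_nonneg_eq_0_iff) auto
    have "\<forall>y\<in>Y S. P S y = 0" if hS: "S \<in> A" for S
    proof
      fix y assume hy: "y \<in> Y S"
      have "b1S S = 0" using z1 hS wpos[OF hS] by fastforce
      then have "\<forall>y\<in>Y S. P S y * Q S y = 0" unfolding b1S_def using finY Qnn[OF hS] Pb
        by (subst (asm) sum_nonneg_eq_0_iff) auto
      then show "P S y = 0" using hy K[OF hS hy] by auto
    qed
    then have "a = 0" unfolding a_eq aS_def by simp
    then show False using that by simp
  qed
  have aSle: "aS S \<le> 1" for S unfolding aS_def sumj[of S, symmetric] using Pb jnn
    by (intro sum_mono mult_left_le_one_le) auto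
  define E where "E = measure_pmf.expectation (indep_rounding X) (\<lambda>\<phi>. assignment_value W P \<phi>)"
  have EB1: "B1 \<le> E" using indep E_def by simp
  have "rounding_bound \<delta> \<kappa> \<le> B1"
  proof (cases "a = 0")
    case True
    then have "\<delta> = 1" using a_def by simp
    then show ?thesis using B1nn by (simp add: rounding_bound_def)
  next
    case anz: False
    then have apos: "a > 0" using ann by simp
    have B1p: "B1 > 0" using B1pos apos by simp
    show ?thesis
    proof (cases "a = 1")
      case True
      then have d0: "\<delta> = 0" using a_def by simp
      have "(\<Sum>S\<in>A. w S * (1 - aS S)) = 0"
        using True a_eq sumw by (simp add: sum_subtractf right_diff_distrib)
      then have z: "\<forall>S\<in>A. w S * (1 - aS S) = 0" using finA wnn aSle
        by (subst (asm) sum_nonneg_eq_0_iff) auto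
      have "b2S S = 0" if hS: "S \<in> A" for S
      proof -
        have "aS S = 1" using z hS wpos[OF hS] by fastforce
        then have "(\<Sum>y\<in>Y S. (1 - P S y) * j S y) = 0"
          unfolding aS_def using sumj[of S] by (simp add: sum_subtractf left_diff_distrib)
        then have "\<forall>y\<in>Y S. (1 - P S y) * j S y = 0" using finY Pb jnn
          by (subst (asm) sum_nonneg_eq_0_iff) auto
        then have "\<forall>y\<in>Y S. P S y = 1" using jpos by fastforce
        then show ?thesis unfolding b2S_def by simp
      qed
      then have B2z: "B2 = 0" unfolding B2_def by simp
      have "ln (1/B1) * a + ln 1 * (1 - a) + 1 - (1/B1) * B1 - 1 * B2 \<le> \<kappa>"
        using main[of "1/B1" 1] B1p by simp
      then have "- ln B1 \<le> \<kappa>" using True B2z B1p by (simp add: ln_div)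
      then have "exp (- \<kappa>) \<le> exp (ln B1)" by simp
      then have "exp (- \<kappa>) \<le> B1" using B1p by simp
      then show ?thesis using d0 by (simp add: rounding_bound_def)
    next
      case False
      then have alt: "a < 1" using ale by simp
      define d where "d = 1 - a"
      have dpos: "d > 0" "d < 1" using alt apos d_def by auto
      have B2le: "B2 \<le> 1" using B12 B1nn by simp
      have "ln (a/B1) * a + ln d * (1 - a) + 1 - (a/B1) * B1 - d * B2 \<le> \<kappa>"
        using main[of "a/B1" d] B1p apos dpos by simp
      moreover have "d * B2 \<le> d" using B2le dpos by (simp add: mult_left_le_one_le B2nn)
      moreover have "(a/B1) * B1 = a" using B1p by simp
      moreover have "ln (a/B1) = ln a - ln B1" using B1p apos by (simp add: ln_div)
      ultimately have "a * ln a - a * ln B1 + d * ln d \<le> \<kappa>" unfolding d_def by (simp add: algebra_simps)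
      then have "ln a + (d * ln d - \<kappa>) / a \<le> ln B1" using apos by (simp add: field_simps)
      then have "exp (ln a + (d * ln d - \<kappa>) / a) \<le> exp (ln B1)" by simp
      then have key: "a * exp ((d * ln d - \<kappa>) / a) \<le> B1" using apos B1p by (simp add: exp_add)
      have dd: "\<delta> = d" using d_def a_def by simp
      have "rounding_bound \<delta> \<kappa> = (exp (d * ln d) * exp (- \<kappa>)) powr (1 / a) * a"
        unfolding rounding_bound_def dd using dpos by (simp add: powr_def d_def)
      also have "\<dots> = exp ((d * ln d - \<kappa>) / a) * a"
        by (simp add: powr_def exp_add[symmetric] field_simps)
      finally show ?thesis using key by (simp add: mult.commute)
    qed
  qed
  then show ?thesis using EB1 E_def by simp
qed

end
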